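(* Let $G$ be a finitely generated group which is fully residually $H$, where $H$ is finitely generated. Let $X, X'$ be finite generating sets for $G$ and $Y, Y'$ finite generating sets for $H$. Then $C_{G,X}^{H,Y} \preceq C_{G,X'}^{H,Y'}$.
   Context: $G$ is fully residually $H$ if for every finite $S \subseteq G-\{1\}$ there is a homomorphism $\phi:G\to H$ with $1 \notin \phi(S)$. For a homomorphism $\phi$, $|\phi|_X^Y := \max_{x\in X}|\phi(x)|_Y$ (word length in $Y$). $C_{G,X}^{H,Y}(R) := \min\{|\phi|_X^Y : \phi:G\to H,\ 1\notin\phi(B_R(G,X)-\{1\})\}$, where $B_R(G,X)$ is the closed ball of radius $R$ about $1$ in the $X$-word metric. For $f,g:\mathbb{N}\to\mathbb{N}$, $f\preceq g$ means there is a constant $K$ with $f(R)\le Kg(KR)+K$ for all $R$. *)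

theory Defs
  imports "HOL-Algebra.Algebra"
begin

definition word_prod :: "('a, 'm) monoid_scheme \<Rightarrow> 'a list \<Rightarrow> 'a" where
  "word_prod G ws = foldr (\<lambda>x y. monoid.mult G x y) ws (one G)"

definition fin_gen_set :: "('a, 'm) monoid_scheme \<Rightarrow> 'a set \<Rightarrow> bool" where
  "fin_gen_set G A \<longleftrightarrow> finite A \<and> A \<subseteq> carrier G \<and> generate G A = carrier G"

definition word_length :: "('a, 'm) monoid_scheme \<Rightarrow> 'a set \<Rightarrow> 'a \<Rightarrow> nat" where
  "word_length G A g = (LEAST n. \<exists>ws. length ws = n \<and>
      set ws \<subseteq> A \<union> m_inv G ` A \<and> word_prod G ws = g)"

definition word_ball :: "('a, 'm) monoid_scheme \<Rightarrow> 'a set \<Rightarrow> nat \<Rightarrow> 'a set" where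
  "word_ball G A R = {g \<in> carrier G. word_length G A g \<le> R}"

definition hom_size :: "('b, 'n) monoid_scheme \<Rightarrow> 'a set \<Rightarrow> 'b set \<Rightarrow> ('a \<Rightarrow> 'b) \<Rightarrow> nat" where
  "hom_size H A Y \<phi> = Max (insert 0 ((\<lambda>x. word_length H Y (\<phi> x)) ` A))"

definition fully_residually :: "('a, 'm) monoid_scheme \<Rightarrow> ('b, 'n) monoid_scheme \<Rightarrow> bool" where
  "fully_residually G H \<longleftrightarrow> (\<forall>S. finite S \<and> S \<subseteq> carrier G - {one G} \<longrightarrow>
      (\<exists>\<phi> \<in> hom G H. one H \<notin> \<phi> ` S))"

definition resid_growth ::
  "('a, 'm) monoid_scheme \<Rightarrow> 'a set \<Rightarrow> ('b, 'n) monoid_scheme \<Rightarrow> 'b set \<Rightarrow> nat \<Rightarrow> nat" where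
  "resid_growth G A H Y R = (LEAST n. \<exists>\<phi> \<in> hom G H.
      one H \<notin> \<phi> ` (word_ball G A R - {one G}) \<and> hom_size H A Y \<phi> = n)"

definition growth_preceq :: "(nat \<Rightarrow> nat) \<Rightarrow> (nat \<Rightarrow> nat) \<Rightarrow> bool" where
  "growth_preceq f g \<longleftrightarrow> (\<exists>K::nat. \<forall>R. f R \<le> K * g (K * R) + K)"

end

theory Submission
  imports Defs
begin

lemma wp_Nil[simp]: "word_prod G [] = one G" by (simp add: word_prod_def)
lemma wp_Cons[simp]: "word_prod G (x#ws) = x \<otimes>\<^bsub>G\<^esub> word_prod G ws" by (simp add: word_prod_def)

lemma wp_carrier:
  assumes "group G" "A \<subseteq> carrier G" "set ws \<subseteq> A \<union> m_inv G ` A"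
  shows "word_prod G ws \<in> carrier G"
  using assms(3)
proof (induction ws)
  case Nil then show ?case using assms(1) by (simp add: group.is_monoid monoid.one_closed)
next
  case (Cons w ws)
  have "w \<in> carrier G" using Cons.prems assms(1,2) by (auto intro: group.inv_closed)
  then show ?case using Cons assms(1) by (simp add: group.is_monoid monoid.m_closed)
qed

lemma wp_append:
  assumes "group G" "A \<subseteq> carrier G" "set ws \<subseteq> A \<union> m_inv G ` A" "set vs \<subseteq> A \<union> m_inv G ` A"
  shows "word_prod G (ws @ vs) = word_prod G ws \<otimes>\<^bsub>G\<^esub> word_prod G vs"
  using assms(3)
proof (induction ws)
  case Nil then show ?case using wp_carrier[OF assms(1,2,4)] assms(1) by (simp add: group.is_monoid monoid.l_one)
next
  case (Cons w ws)
  have "w \<in> carrier G" using Cons.prems assms(1,2) by (auto intro: group.inv_closed)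
  then show ?case using Cons wp_carrier[OF assms(1,2,4)] wp_carrier[OF assms(1,2)] assms(1)
    by (simp add: group.is_monoid monoid.m_assoc)
qed

lemma wp_inv:
  assumes "group G" "A \<subseteq> carrier G" "set ws \<subseteq> A \<union> m_inv G ` A"
  shows "set (rev (map (m_inv G) ws)) \<subseteq> A \<union> m_inv G ` A
     \<and> word_prod G (rev (map (m_inv G) ws)) = m_inv G (word_prod G ws)"
  using assms(3)
proof (induction ws)
  case Nil then show ?case using assms(1) by (simp add: monoid.inv_one group.is_monoid)
next
  case (Cons w ws)
  have w: "w \<in> carrier G" using Cons.prems assms(1,2) by (auto intro: group.inv_closed)
  have wl: "m_inv G w \<in> A \<union> m_inv G ` A" using Cons.prems assms(1,2)
    by (auto simp: group.inv_inv subset_iff)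
  have IH: "set (rev (map (m_inv G) ws)) \<subseteq> A \<union> m_inv G ` A"
     "word_prod G (rev (map (m_inv G) ws)) = m_inv G (word_prod G ws)" using Cons by auto
  have "word_prod G (rev (map (m_inv G) (w#ws))) = word_prod G (rev (map (m_inv G) ws)) \<otimes>\<^bsub>G\<^esub> word_prod G [m_inv G w]"
    using wp_append[OF assms(1,2) IH(1)] wl by simp
  also have "\<dots> = m_inv G (word_prod G ws) \<otimes>\<^bsub>G\<^esub> m_inv G w"
    using IH(2) w assms(1) by (simp add: group.inv_closed group.is_monoid monoid.r_one)
  also have "\<dots> = m_inv G (w \<otimes>\<^bsub>G\<^esub> word_prod G ws)"
    using w wp_carrier[OF assms(1,2)] Cons.prems assms(1) by (simp add: group.inv_mult_group)
  finally show ?case using IH wl by simp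
qed

lemma gen_word:
  assumes "group G" "A \<subseteq> carrier G" "g \<in> generate G A"
  shows "\<exists>ws. set ws \<subseteq> A \<union> m_inv G ` A \<and> word_prod G ws = g"
  using assms(3)
proof (induction rule: generate.induct)
  case one then show ?case by (intro exI[of _ "[]"]) simp
next
  case (incl h) then show ?case using assms(1,2)
    by (intro exI[of _ "[h]"]) (auto simp: group.is_monoid monoid.r_one)
next
  case (inv h) then show ?case using assms(1,2)
    by (intro exI[of _ "[m_inv G h]"]) (auto simp: group.is_monoid monoid.r_one group.inv_closed)
next
  case (eng h1 h2)
  then obtain w1 w2 where "set w1 \<subseteq> A \<union> m_inv G ` A" "word_prod G w1 = h1"
    "set w2 \<subseteq> A \<union> m_inv G ` A" "word_prod G w2 = h2" by blast
  then show ?case using wp_append[OF assms(1,2)] by (intro exI[of _ "w1@w2"]) auto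
qed

lemma wl_le:
  assumes "set ws \<subseteq> A \<union> m_inv G ` A"
  shows "word_length G A (word_prod G ws) \<le> length ws"
  unfolding word_length_def using assms by (intro Least_le) blast

lemma wl_word:
  assumes "group G" "A \<subseteq> carrier G" "generate G A = carrier G" "g \<in> carrier G"
  shows "\<exists>ws. length ws = word_length G A g \<and> set ws \<subseteq> A \<union> m_inv G ` A \<and> word_prod G ws = g"
proof -
  obtain ws where "set ws \<subseteq> A \<union> m_inv G ` A \<and> word_prod G ws = g"
    using gen_word[OF assms(1,2)] assms(3,4) by blast
  then have "\<exists>n ws. length ws = n \<and> set ws \<subseteq> A \<union> m_inv G ` A \<and> word_prod G ws = g" by blast
  then show ?thesis unfolding word_length_def by (rule LeastI_ex)
qed

lemma wl_mult:
  assumes "group G" "A \<subseteq> carrier G" "generate G A = carrier G" "x \<in> carrier G" "y \<in> carrier G"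
  shows "word_length G A (x \<otimes>\<^bsub>G\<^esub> y) \<le> word_length G A x + word_length G A y"
proof -
  obtain w1 w2 where a: "length w1 = word_length G A x" "set w1 \<subseteq> A \<union> m_inv G ` A" "word_prod G w1 = x"
    "length w2 = word_length G A y" "set w2 \<subseteq> A \<union> m_inv G ` A" "word_prod G w2 = y"
    using wl_word[OF assms(1,2,3)] assms(4,5) by metis
  have "word_length G A (word_prod G (w1@w2)) \<le> length (w1@w2)" using a by (intro wl_le) auto
  then show ?thesis using a wp_append[OF assms(1,2) a(2) a(5)] by simp
qed

lemma wl_inv:
  assumes "group G" "A \<subseteq> carrier G" "generate G A = carrier G" "x \<in> carrier G"
  shows "word_length G A (m_inv G x) \<le> word_length G A x"
proof -
  obtain w where a: "length w = word_length G A x" "set w \<subseteq> A \<union> m_inv G ` A" "word_prod G w = x"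
    using wl_word[OF assms] by metis
  note b = wp_inv[OF assms(1,2) a(2)]
  have "word_length G A (word_prod G (rev (map (m_inv G) w))) \<le> length (rev (map (m_inv G) w))"
    using b by (intro wl_le) auto
  then show ?thesis using a b by simp
qed

lemma key:
  assumes G: "group G" and H: "group H" and phi: "\<phi> \<in> hom G H" and A: "A \<subseteq> carrier G"
    and Y: "Y \<subseteq> carrier H" "generate H Y = carrier H"
    and m: "\<forall>a\<in>A. word_length H Y (\<phi> a) \<le> m"
    and ws: "set ws \<subseteq> A \<union> m_inv G ` A"
  shows "word_length H Y (\<phi> (word_prod G ws)) \<le> m * length ws"
  using ws
proof (induction ws)
  case Nil
  have "word_length H Y (word_prod H []) \<le> length ([]::'b list)" using wl_le[of "[]" Y H] by simp
  then show ?case using hom_one[OF phi G H] by simp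
next
  case (Cons w ws)
  interpret gh: group_hom G H \<phi> using G H phi by (simp add: group_hom_def group_hom_axioms_def)
  have w: "w \<in> carrier G" using Cons.prems A G by (auto intro: group.inv_closed)
  have p: "word_prod G ws \<in> carrier G" using wp_carrier[OF G A] Cons.prems by simp
  have lw: "word_length H Y (\<phi> w) \<le> m"
  proof (cases "w \<in> A")
    case True then show ?thesis using m by simp
  next
    case False
    then obtain a where "a \<in> A" "w = m_inv G a" using Cons.prems by auto
    then show ?thesis using m wl_inv[OF H Y, of "\<phi> a"] A by fastforce
  qed
  have "word_length H Y (\<phi> (word_prod G (w#ws))) = word_length H Y (\<phi> w \<otimes>\<^bsub>H\<^esub> \<phi> (word_prod G ws))"
    using w p by simp
  also have "\<dots> \<le> word_length H Y (\<phi> w) + word_length H Y (\<phi> (word_prod G ws))"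
    using wl_mult[OF H Y] w p by simp
  also have "\<dots> \<le> m + m * length ws" using lw Cons by simp
  finally show ?case by simp
qed

lemma id_hom': "group G \<Longrightarrow> id \<in> hom G G" by (simp add: hom_def)

lemma key_len:
  assumes G: "group G" and H: "group H" and phi: "\<phi> \<in> hom G H" and A: "fin_gen_set G A"
    and Y: "fin_gen_set H Y"
    and m: "\<forall>a\<in>A. word_length H Y (\<phi> a) \<le> m" and g: "g \<in> carrier G"
  shows "word_length H Y (\<phi> g) \<le> m * word_length G A g"
proof -
  obtain w where a: "length w = word_length G A g" "set w \<subseteq> A \<union> m_inv G ` A" "word_prod G w = g"
    using wl_word[OF G, of A g] A g unfolding fin_gen_set_def by metis
  show ?thesis using key[OF G H phi _ _ _ m a(2)] A Y a unfolding fin_gen_set_def by simp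
qed

lemma ball_finite:
  assumes G: "group G" and A: "fin_gen_set G A"
  shows "finite (word_ball G A R)"
proof -
  have "word_ball G A R \<subseteq> word_prod G ` {ws. set ws \<subseteq> A \<union> m_inv G ` A \<and> length ws \<le> R}"
  proof
    fix g assume "g \<in> word_ball G A R"
    then have g: "g \<in> carrier G" "word_length G A g \<le> R" by (auto simp: word_ball_def)
    then obtain w where "length w = word_length G A g" "set w \<subseteq> A \<union> m_inv G ` A" "word_prod G w = g"
      using wl_word[OF G, of A g] A unfolding fin_gen_set_def by metis
    then show "g \<in> word_prod G ` {ws. set ws \<subseteq> A \<union> m_inv G ` A \<and> length ws \<le> R}" using g by auto
  qed
  moreover have "finite {ws. set ws \<subseteq> A \<union> m_inv G ` A \<and> length ws \<le> R}"
    using A unfolding fin_gen_set_def by (intro finite_lists_length_le) auto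
  ultimately show ?thesis by (meson finite_surj)
qed

lemma resid_attained:
  assumes G: "group G" and A: "fin_gen_set G A" and FR: "fully_residually G H"
  shows "\<exists>\<phi> \<in> hom G H. one H \<notin> \<phi> ` (word_ball G A R - {one G}) \<and> hom_size H A Y \<phi> = resid_growth G A H Y R"
proof -
  have "\<exists>\<phi> \<in> hom G H. one H \<notin> \<phi> ` (word_ball G A R - {one G})"
    using FR ball_finite[OF G A, of R] unfolding fully_residually_def word_ball_def by auto
  then have "\<exists>n. \<exists>\<phi> \<in> hom G H. one H \<notin> \<phi> ` (word_ball G A R - {one G}) \<and> hom_size H A Y \<phi> = n" by blast
  then show ?thesis unfolding resid_growth_def by (rule LeastI_ex)
qed

lemma resid_le:
  assumes "\<phi> \<in> hom G H" "one H \<notin> \<phi> ` (word_ball G A R - {one G})"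
  shows "resid_growth G A H Y R \<le> hom_size H A Y \<phi>"
  unfolding resid_growth_def using assms by (intro Least_le) blast

lemma resid_mono:
  assumes G: "group G" and A: "fin_gen_set G A" and FR: "fully_residually G H" and "R \<le> R'"
  shows "resid_growth G A H Y R \<le> resid_growth G A H Y R'"
proof -
  obtain \<phi> where p: "\<phi> \<in> hom G H" "one H \<notin> \<phi> ` (word_ball G A R' - {one G})"
    "hom_size H A Y \<phi> = resid_growth G A H Y R'" using resid_attained[OF G A FR] by blast
  have "word_ball G A R \<subseteq> word_ball G A R'" using assms(4) by (auto simp: word_ball_def)
  then have "one H \<notin> \<phi> ` (word_ball G A R - {one G})" using p(2) by blast
  then show ?thesis using resid_le[OF p(1)] p(3) by metis
qed

lemma hom_size_le:
  assumes "finite A" "\<forall>a\<in>A. word_length H Y (\<phi> a) \<le> n"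
  shows "hom_size H A Y \<phi> \<le> n"
  unfolding hom_size_def using assms by auto

lemma hom_size_ge:
  assumes "finite A" "a \<in> A"
  shows "word_length H Y (\<phi> a) \<le> hom_size H A Y \<phi>"
  unfolding hom_size_def using assms by (intro Max_ge) auto

theorem mainTheorem6:
  fixes G :: "('a, 'm) monoid_scheme" and H :: "('b, 'n) monoid_scheme"
    and X1 X2 :: "'a set" and Y1 Y2 :: "'b set"
  assumes "group G" and "group H"
    and "fully_residually G H"
    and "fin_gen_set G X1" and "fin_gen_set G X2"
    and "fin_gen_set H Y1" and "fin_gen_set H Y2"
  shows "growth_preceq (resid_growth G X1 H Y1) (resid_growth G X2 H Y2)"
proof -
  note G = assms(1) and H = assms(2) and FR = assms(3)
  define c where "c = Max (insert 1 ((\<lambda>x. word_length G X2 x) ` X1))"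
  define d where "d = Max (insert 1 ((\<lambda>y. word_length H Y1 y) ` Y2))"
  have fX1: "finite X1" and fY2: "finite Y2" using assms(4,7) by (auto simp: fin_gen_set_def)
  have c1: "c \<ge> 1" unfolding c_def using fX1 by (intro Max_ge) auto
  have d1: "d \<ge> 1" unfolding d_def using fY2 by (intro Max_ge) auto
  have cX: "\<forall>x\<in>X1. word_length G X2 (id x) \<le> c" unfolding c_def using fX1 by (auto intro: Max_ge)
  have dY: "\<forall>y\<in>Y2. word_length H Y1 (id y) \<le> d" unfolding d_def using fY2 by (auto intro: Max_ge)
  define K where "K = c * d"
  have "\<forall>R. resid_growth G X1 H Y1 R \<le> K * resid_growth G X2 H Y2 (K * R) + K"
  proof
    fix R
    obtain \<phi> where p: "\<phi> \<in> hom G H" "one H \<notin> \<phi> ` (word_ball G X2 (c*R) - {one G})"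
      "hom_size H X2 Y2 \<phi> = resid_growth G X2 H Y2 (c*R)" using resid_attained[OF G assms(5) FR] by blast
    have "word_ball G X1 R \<subseteq> word_ball G X2 (c*R)"
    proof
      fix g assume "g \<in> word_ball G X1 R"
      then have g: "g \<in> carrier G" "word_length G X1 g \<le> R" by (auto simp: word_ball_def)
      have "word_length G X2 (id g) \<le> c * word_length G X1 g"
        by (rule key_len[OF G G id_hom'[OF G] assms(4) assms(5) cX g(1)])
      also have "\<dots> \<le> c * R" using g by simp
      finally show "g \<in> word_ball G X2 (c*R)" using g by (simp add: word_ball_def)
    qed
    then have sep: "one H \<notin> \<phi> ` (word_ball G X1 R - {one G})" using p(2) by blast
    define m where "m = hom_size H X2 Y2 \<phi>"
    have m: "\<forall>a\<in>X2. word_length H Y2 (\<phi> a) \<le> m" unfolding m_def using assms(5)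
      by (auto simp: fin_gen_set_def intro: hom_size_ge)
    have "\<forall>x\<in>X1. word_length H Y1 (\<phi> x) \<le> K * m"
    proof
      fix x assume x: "x \<in> X1"
      have xc: "x \<in> carrier G" using x assms(4) by (auto simp: fin_gen_set_def)
      have phx: "\<phi> x \<in> carrier H" using p(1) xc by (rule hom_in_carrier)
      have "word_length H Y1 (id (\<phi> x)) \<le> d * word_length H Y2 (\<phi> x)"
        by (rule key_len[OF H H id_hom'[OF H] assms(7) assms(6) dY phx])
      also have "word_length H Y2 (\<phi> x) \<le> m * word_length G X2 x"
        by (rule key_len[OF G H p(1) assms(5) assms(7) m xc])
      also have "word_length G X2 x \<le> c" using cX x by simp
      finally show "word_length H Y1 (\<phi> x) \<le> K * m"
        by (simp add: K_def mult_le_mono2 algebra_simps)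
    qed
    then have "hom_size H X1 Y1 \<phi> \<le> K * m" using fX1 by (rule hom_size_le[rotated])
    moreover have "resid_growth G X1 H Y1 R \<le> hom_size H X1 Y1 \<phi>" by (rule resid_le[OF p(1) sep])
    moreover have "m \<le> resid_growth G X2 H Y2 (K*R)" unfolding m_def p(3)
      using resid_mono[OF G assms(5) FR] d1 by (simp add: K_def)
    ultimately show "resid_growth G X1 H Y1 R \<le> K * resid_growth G X2 H Y2 (K * R) + K"
      by (meson le_trans mult_le_mono2 le_add1)
  qed
  then show ?thesis unfolding growth_preceq_def by blast
qed

end
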